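(* In the category of pointed Frölicher spaces, for any basepoint-preserving smooth map $f:X\to Y$ the sequence $X\xrightarrow{f}Y\xrightarrow{l}\mathbf T_f$ is right exact, where $l(y)=[y]$ is the inclusion of $Y$ into the flattened mapping cone; that is, for every pointed Frölicher space $W$ the sequence of pointed sets $[\mathbf T_f,W]\xrightarrow{l^*}[Y,W]\xrightarrow{f^*}[X,W]$ is exact.
   Context: A Frölicher space is a triple $(X,\mathcal C_X,\mathcal F_X)$ with $\mathcal C_X\subseteq X^{\mathbb R}$, $\mathcal F_X\subseteq\mathbb R^X$, such that $\mathcal F_X=\{f\mid f\circ c\in C^\infty(\mathbb R,\mathbb R)\ \forall c\in\mathcal C_X\}$ and $\mathcal C_X=\{c\mid f\circ c\in C^\infty(\mathbb R,\mathbb R)\ \forall f\in\mathcal F_X\}$. Smooth maps: $g\circ\varphi\in\mathcal F_X$ for all $g\in\mathcal F_Y$. Subspaces carry the initial structure, products the structure generated by $f\circ\pi_i$, coproducts, quotients and pushouts the final structure. $I$ is $[0,1]$ with the subspace structure from $\mathbb R$; $\mathbf I$ is $[0,1]$ with the structure generated by those structure functions of $I$ that are constant on $[0,\epsilon)$ and on $(1-\epsilon,1]$ for some $0<\epsilon<1/4$. The flattened mapping cylinder $\mathbf I_f$ is the quotient of $(\mathbf I\times X)\sqcup Y$ by $(1,x)\sim f(x)$, elements $[t,x]$, $[y]$. In the pointed setting (basepoint $x_0\in X$), the flattened mapping cone $\mathbf T_f$ is the quotient of $\mathbf I_f$ collapsing $(\{0\}\times X)\cup(\mathbf I\times\{x_0\})$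 to a point, which is its basepoint. For pointed $X,W$, $[X,W]$ is the set of basepoint-preserving smooth maps modulo pointed smooth homotopy (smooth $H:I\times X\to W$ with $H(t,x_0)=w_0$), pointed by the class of the constant map; $g^*$ is precomposition with $g$; exactness at the middle means $\operatorname{im}l^*=(f^* )^{-1}(\ast)$. *)

theory Defs
  imports Complex_Main
begin

definition smooth_real :: "(real \<Rightarrow> real) \<Rightarrow> bool" where
  "smooth_real g \<longleftrightarrow>
     (\<exists>D :: nat \<Rightarrow> real \<Rightarrow> real. D 0 = g \<and>
        (\<forall>n x. (D n has_real_derivative D (Suc n) x) (at x)))"

text \<open>A Froelicher structure on a carrier set: curves are maps real to carrier;
  structure functions are maps to real (only their values on the carrier matter).\<close>

record 'a frol =
  car :: "'a set"
  curves :: "(real \<Rightarrow> 'a) set"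
  funcs :: "('a \<Rightarrow> real) set"

definition curves_of :: "'a set \<Rightarrow> ('a \<Rightarrow> real) set \<Rightarrow> (real \<Rightarrow> 'a) set" where
  "curves_of A F0 = {c. (\<forall>t. c t \<in> A) \<and> (\<forall>f\<in>F0. smooth_real (f \<circ> c))}"

definition funcs_of :: "(real \<Rightarrow> 'a) set \<Rightarrow> ('a \<Rightarrow> real) set" where
  "funcs_of C0 = {f. \<forall>c\<in>C0. smooth_real (f \<circ> c)}"

definition frolicher :: "'a frol \<Rightarrow> bool" where
  "frolicher S \<longleftrightarrow> funcs S = funcs_of (curves S) \<and> curves S = curves_of (car S) (funcs S)"

definition gen_by_funcs :: "'a set \<Rightarrow> ('a \<Rightarrow> real) set \<Rightarrow> 'a frol" where
  "gen_by_funcs A F0 = \<lparr>car = A, curves = curves_of A F0, funcs = funcs_of (curves_of A F0)\<rparr>"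

definition gen_by_curves :: "'a set \<Rightarrow> (real \<Rightarrow> 'a) set \<Rightarrow> 'a frol" where
  "gen_by_curves A C0 = \<lparr>car = A, curves = curves_of A (funcs_of C0), funcs = funcs_of C0\<rparr>"

definition smooth_map :: "'a frol \<Rightarrow> 'b frol \<Rightarrow> ('a \<Rightarrow> 'b) \<Rightarrow> bool" where
  "smooth_map X Y \<phi> \<longleftrightarrow> (\<forall>x\<in>car X. \<phi> x \<in> car Y) \<and> (\<forall>g\<in>funcs Y. g \<circ> \<phi> \<in> funcs X)"

definition real_frol :: "real frol" where
  "real_frol = gen_by_funcs UNIV {id}"

definition subspace :: "'a frol \<Rightarrow> 'a set \<Rightarrow> 'a frol" where
  "subspace X A = gen_by_funcs A (funcs X)"

definition product :: "'a frol \<Rightarrow> 'b frol \<Rightarrow> ('a \<times> 'b) frol" where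
  "product X Y = gen_by_funcs (car X \<times> car Y)
     ({f \<circ> fst | f. f \<in> funcs X} \<union> {g \<circ> snd | g. g \<in> funcs Y})"

definition coproduct :: "'a frol \<Rightarrow> 'b frol \<Rightarrow> ('a + 'b) frol" where
  "coproduct X Y = gen_by_curves (Inl ` car X \<union> Inr ` car Y)
     ({Inl \<circ> c | c. c \<in> curves X} \<union> {Inr \<circ> c | c. c \<in> curves Y})"

definition quotient_frol :: "'a frol \<Rightarrow> 'a rel \<Rightarrow> 'a set frol" where
  "quotient_frol X R = gen_by_curves (car X // R) {(\<lambda>t. R `` {c t}) | c. c \<in> curves X}"

definition equiv_closure :: "'a set \<Rightarrow> 'a rel \<Rightarrow> 'a rel" where
  "equiv_closure S R0 = Id_on S \<union> (R0 \<union> R0\<inverse>)\<^sup>+"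

definition unit_I :: "real frol" where
  "unit_I = subspace real_frol {0..1}"

definition flat_I :: "real frol" where
  "flat_I = gen_by_funcs {0..1}
     {f \<in> funcs unit_I. \<exists>\<epsilon>. 0 < \<epsilon> \<and> \<epsilon> < 1/4 \<and>
        (\<forall>s\<in>{0..<\<epsilon>}. \<forall>t\<in>{0..<\<epsilon>}. f s = f t) \<and>
        (\<forall>s\<in>{1-\<epsilon><..1}. \<forall>t\<in>{1-\<epsilon><..1}. f s = f t)}"

definition cyl_pre :: "'a frol \<Rightarrow> 'b frol \<Rightarrow> ((real \<times> 'a) + 'b) frol" where
  "cyl_pre X Y = coproduct (product flat_I X) Y"

definition cyl_rel :: "'a frol \<Rightarrow> 'b frol \<Rightarrow> ('a \<Rightarrow> 'b) \<Rightarrow> ((real \<times> 'a) + 'b) rel" where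
  "cyl_rel X Y f = equiv_closure (car (cyl_pre X Y)) {(Inl (1, x), Inr (f x)) | x. x \<in> car X}"

definition mapping_cyl :: "'a frol \<Rightarrow> 'b frol \<Rightarrow> ('a \<Rightarrow> 'b) \<Rightarrow> ((real \<times> 'a) + 'b) set frol" where
  "mapping_cyl X Y f = quotient_frol (cyl_pre X Y) (cyl_rel X Y f)"

definition cyl_class :: "'a frol \<Rightarrow> 'b frol \<Rightarrow> ('a \<Rightarrow> 'b) \<Rightarrow> ((real \<times> 'a) + 'b) \<Rightarrow> ((real \<times> 'a) + 'b) set" where
  "cyl_class X Y f z = cyl_rel X Y f `` {z}"

definition cone_base :: "'a frol \<Rightarrow> 'b frol \<Rightarrow> ('a \<Rightarrow> 'b) \<Rightarrow> 'a \<Rightarrow> ((real \<times> 'a) + 'b) set set" where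
  "cone_base X Y f x0 = {cyl_class X Y f (Inl (0, x)) | x. x \<in> car X}
                      \<union> {cyl_class X Y f (Inl (t, x0)) | t. t \<in> {0..1}}"

definition cone_rel :: "'a frol \<Rightarrow> 'b frol \<Rightarrow> ('a \<Rightarrow> 'b) \<Rightarrow> 'a \<Rightarrow> ((real \<times> 'a) + 'b) set rel" where
  "cone_rel X Y f x0 = Id_on (car (mapping_cyl X Y f)) \<union> cone_base X Y f x0 \<times> cone_base X Y f x0"

definition mapping_cone :: "'a frol \<Rightarrow> 'b frol \<Rightarrow> ('a \<Rightarrow> 'b) \<Rightarrow> 'a \<Rightarrow> ((real \<times> 'a) + 'b) set set frol" where
  "mapping_cone X Y f x0 = quotient_frol (mapping_cyl X Y f) (cone_rel X Y f x0)"

definition cone_pt :: "'a frol \<Rightarrow> 'b frol \<Rightarrow> ('a \<Rightarrow> 'b) \<Rightarrow> 'a \<Rightarrow> ((real \<times> 'a) + 'b) set set" where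
  "cone_pt X Y f x0 = cone_rel X Y f x0 `` {cyl_class X Y f (Inl (0, x0))}"

definition cone_incl :: "'a frol \<Rightarrow> 'b frol \<Rightarrow> ('a \<Rightarrow> 'b) \<Rightarrow> 'a \<Rightarrow> 'b \<Rightarrow> ((real \<times> 'a) + 'b) set set" where
  "cone_incl X Y f x0 y = cone_rel X Y f x0 `` {cyl_class X Y f (Inr y)}"

definition pointed_maps :: "'a frol \<Rightarrow> 'a \<Rightarrow> 'w frol \<Rightarrow> 'w \<Rightarrow> ('a \<Rightarrow> 'w) set" where
  "pointed_maps X x0 W w0 = {\<phi>. smooth_map X W \<phi> \<and> \<phi> x0 = w0}"

definition pointed_homotopic :: "'a frol \<Rightarrow> 'a \<Rightarrow> 'w frol \<Rightarrow> 'w \<Rightarrow> ('a \<Rightarrow> 'w) \<Rightarrow> ('a \<Rightarrow> 'w) \<Rightarrow> bool" where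
  "pointed_homotopic X x0 W w0 \<phi> \<psi> \<longleftrightarrow>
     (\<exists>H. smooth_map (product unit_I X) W H \<and>
          (\<forall>x\<in>car X. H (0, x) = \<phi> x \<and> H (1, x) = \<psi> x) \<and>
          (\<forall>t\<in>{0..1}. H (t, x0) = w0))"

definition htpy_class :: "'a frol \<Rightarrow> 'a \<Rightarrow> 'w frol \<Rightarrow> 'w \<Rightarrow> ('a \<Rightarrow> 'w) \<Rightarrow> ('a \<Rightarrow> 'w) set" where
  "htpy_class X x0 W w0 \<phi> = {\<psi> \<in> pointed_maps X x0 W w0. pointed_homotopic X x0 W w0 \<phi> \<psi>}"

definition htpy_set :: "'a frol \<Rightarrow> 'a \<Rightarrow> 'w frol \<Rightarrow> 'w \<Rightarrow> ('a \<Rightarrow> 'w) set set" where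
  "htpy_set X x0 W w0 = htpy_class X x0 W w0 ` pointed_maps X x0 W w0"

definition induced :: "'a frol \<Rightarrow> 'a \<Rightarrow> 'w frol \<Rightarrow> 'w \<Rightarrow> ('a \<Rightarrow> 'b) \<Rightarrow> ('b \<Rightarrow> 'w) set \<Rightarrow> ('a \<Rightarrow> 'w) set" where
  "induced X x0 W w0 g K = htpy_class X x0 W w0 ((SOME \<phi>. \<phi> \<in> K) \<circ> g)"

end

theory Submission
  imports Defs "HOL-Computational_Algebra.Polynomial"
begin
fun dn :: "nat \<Rightarrow> (real \<Rightarrow> real) \<Rightarrow> bool" where
  "dn 0 f = True"
| "dn (Suc n) f = (\<exists>f'. (\<forall>x. (f has_real_derivative f' x) (at x)) \<and> dn n f')"

definition myderiv :: "(real \<Rightarrow> real) \<Rightarrow> real \<Rightarrow> real" where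
  "myderiv f x = (SOME D. DERIV f x :> D)"

lemma my_deriv: "DERIV f x :> f' \<Longrightarrow> myderiv f x = f'"
  unfolding myderiv_def by (metis some_equality DERIV_unique)

lemma dn_mono: "dn (Suc n) f \<Longrightarrow> dn n f"
proof (induction n arbitrary: f)
  case 0 then show ?case by simp
next
  case (Suc n)
  then obtain f' where "\<forall>x. (f has_real_derivative f' x) (at x)" "dn (Suc n) f'" by auto
  with Suc.IH show ?case by auto
qed

lemma smooth_real_dn: "smooth_real g \<longleftrightarrow> (\<forall>n. dn n g)"
proof
  assume "smooth_real g"
  then obtain D :: "nat \<Rightarrow> real \<Rightarrow> real" where D: "D 0 = g" "\<forall>n x. (D n has_real_derivative D (Suc n) x) (at x)"
    unfolding smooth_real_def by auto
  have "\<forall>k. dn n (D k)" for n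
    by (induction n) (use D in auto)
  then show "\<forall>n. dn n g" using D by metis
next
  assume A: "\<forall>n. dn n g"
  define D :: "nat \<Rightarrow> real \<Rightarrow> real" where "D k = (myderiv ^^ k) g" for k
  have key: "\<forall>n. dn n (D k)" for k
  proof (induction k)
    case 0 then show ?case using A by (simp add: D_def)
  next
    case (Suc k)
    show ?case
    proof
      fix n
      from Suc have "dn (Suc n) (D k)" by blast
      then obtain f' where f': "\<forall>x. (D k has_real_derivative f' x) (at x)" "dn n f'" by auto
      have "f' = myderiv (D k)" using f'(1) my_deriv by (metis ext)
      then show "dn n (D (Suc k))" using f' by (simp add: D_def)
    qed
  qed
  have "(D n has_real_derivative D (Suc n) x) (at x)" for n x
  proof -
    from key[of n] have "dn (Suc 0) (D n)" by blast
    then obtain f' where f': "\<forall>x. (D n has_real_derivative f' x) (at x)" by auto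
    then have "myderiv (D n) x = f' x" using my_deriv by blast
    then show ?thesis using f' by (simp add: D_def)
  qed
  then show "smooth_real g" unfolding smooth_real_def
    by (rule_tac x=D in exI) (simp add: D_def)
qed

lemma dn_const: "dn n (\<lambda>x. c)"
proof (induction n arbitrary: c)
  case (Suc n) then show ?case by (auto intro!: exI[of _ "\<lambda>x. 0"])
qed simp

lemma dn_add: "dn n f \<Longrightarrow> dn n g \<Longrightarrow> dn n (\<lambda>x. f x + g x)"
proof (induction n arbitrary: f g)
  case (Suc n)
  then obtain f' g' where "\<forall>x. (f has_real_derivative f' x) (at x)" "dn n f'"
     "\<forall>x. (g has_real_derivative g' x) (at x)" "dn n g'" by auto
  with Suc.IH show ?case by (auto intro!: exI[of _ "\<lambda>x. f' x + g' x"] derivative_intros)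
qed simp

lemma dn_mult: "dn n f \<Longrightarrow> dn n g \<Longrightarrow> dn n (\<lambda>x. f x * g x)"
proof (induction n arbitrary: f g)
  case (Suc n)
  then obtain f' g' where d: "\<forall>x. (f has_real_derivative f' x) (at x)" "dn n f'"
     "\<forall>x. (g has_real_derivative g' x) (at x)" "dn n g'" by auto
  have "dn n f" "dn n g" using Suc.prems dn_mono by auto
  then have "dn n (\<lambda>x. f' x * g x + f x * g' x)"
    using Suc.IH d dn_add by auto
  moreover have "\<forall>x. ((\<lambda>x. f x * g x) has_real_derivative (f' x * g x + f x * g' x)) (at x)"
    using d by (auto intro!: derivative_eq_intros)
  ultimately show ?case by auto
qed simp

lemma dn_comp: "dn n g \<Longrightarrow> dn n c \<Longrightarrow> dn n (\<lambda>x. g (c x))"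
proof (induction n arbitrary: g c)
  case (Suc n)
  then obtain g' c' where d: "\<forall>x. (g has_real_derivative g' x) (at x)" "dn n g'"
     "\<forall>x. (c has_real_derivative c' x) (at x)" "dn n c'" by auto
  have "dn n c" using Suc.prems dn_mono by auto
  then have "dn n (\<lambda>x. g' (c x) * c' x)"
    using Suc.IH d dn_mult by auto
  moreover have "\<forall>x. ((\<lambda>x. g (c x)) has_real_derivative (g' (c x) * c' x)) (at x)"
    using d by (metis DERIV_chain2)
  ultimately show ?case by auto
qed simp

lemma dn_inverse: "dn n g \<Longrightarrow> (\<forall>x. g x \<noteq> 0) \<Longrightarrow> dn n (\<lambda>x. 1 / g x)"
proof (induction n arbitrary: g)
  case (Suc n)
  then obtain g' where d: "\<forall>x. (g has_real_derivative g' x) (at x)" "dn n g'" by auto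
  have "dn n g" using Suc.prems dn_mono by auto
  then have i: "dn n (\<lambda>x. 1 / g x)" using Suc by auto
  have a: "dn n (\<lambda>x. - 1 * g' x)" using dn_mult[OF dn_const d(2)] by blast
  have b: "dn n (\<lambda>x. - 1 * g' x * (1 / g x))" using dn_mult[OF a i] by blast
  have "dn n (\<lambda>x. - 1 * g' x * (1 / g x) * (1 / g x))" using dn_mult[OF b i] by blast
  moreover have "\<forall>x. ((\<lambda>x. 1 / g x) has_real_derivative (- 1 * g' x * (1 / g x) * (1 / g x))) (at x)"
    using d Suc.prems(2) by (auto intro!: derivative_eq_intros simp: power2_eq_square field_simps)
  ultimately show ?case by auto
qed simp

lemma dn_id: "dn n (\<lambda>x. x)"
proof (cases n)
  case (Suc m) then show ?thesis
    by (auto intro!: exI[of _ "\<lambda>x. 1"] dn_const)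
qed simp

lemma smooth_const: "smooth_real (\<lambda>x. c)" by (simp add: smooth_real_dn dn_const)
lemma smooth_id: "smooth_real (\<lambda>x. x)" by (simp add: smooth_real_dn dn_id)
lemma smooth_add: "smooth_real f \<Longrightarrow> smooth_real g \<Longrightarrow> smooth_real (\<lambda>x. f x + g x)"
  by (simp add: smooth_real_dn dn_add)
lemma smooth_mult: "smooth_real f \<Longrightarrow> smooth_real g \<Longrightarrow> smooth_real (\<lambda>x. f x * g x)"
  by (simp add: smooth_real_dn dn_mult)
lemma smooth_comp: "smooth_real g \<Longrightarrow> smooth_real c \<Longrightarrow> smooth_real (\<lambda>x. g (c x))"
  by (simp add: smooth_real_dn dn_comp)
lemma smooth_inverse: "smooth_real g \<Longrightarrow> (\<forall>x. g x \<noteq> 0) \<Longrightarrow> smooth_real (\<lambda>x. 1 / g x)"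
  by (simp add: smooth_real_dn dn_inverse)
lemma smooth_affine: "smooth_real (\<lambda>x. a * x + b)"
  using smooth_add[OF smooth_mult[OF smooth_const smooth_id] smooth_const] by simp

lemma smooth_cont: "smooth_real g \<Longrightarrow> continuous_on UNIV g"
  unfolding smooth_real_def
  by (metis DERIV_isCont continuous_at_imp_continuous_on)

lemma smooth_local:
  assumes "open U" "open V" "U \<union> V = UNIV" "smooth_real g1" "smooth_real g2"
    "\<forall>x\<in>U. f x = g1 x" "\<forall>x\<in>V. f x = g2 x"
  shows "smooth_real f"
proof -
  obtain D1 where D1: "D1 0 = g1" "\<forall>n x. (D1 n has_real_derivative D1 (Suc n) x) (at x)"
    using assms(4) unfolding smooth_real_def by auto
  obtain D2 where D2: "D2 0 = g2" "\<forall>n x. (D2 n has_real_derivative D2 (Suc n) x) (at x)"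
    using assms(5) unfolding smooth_real_def by auto
  have agree: "\<forall>x\<in>U\<inter>V. D1 n x = D2 n x" for n
  proof (induction n)
    case 0 then show ?case using assms D1 D2 by auto
  next
    case (Suc n)
    show ?case
    proof
      fix x assume x: "x \<in> U \<inter> V"
      have "(D2 n has_real_derivative D1 (Suc n) x) (at x)"
        using has_field_derivative_transform_within_open[OF D1(2)[rule_format, of n x] _ x] Suc assms(1,2)
        by blast
      then show "D1 (Suc n) x = D2 (Suc n) x" using D2(2) DERIV_unique by blast
    qed
  qed
  define D where "D n x = (if x \<in> U then D1 n x else D2 n x)" for n x
  have "D 0 = f" using assms D1 D2 by (auto simp: D_def fun_eq_iff)
  moreover have "(D n has_real_derivative D (Suc n) x) (at x)" for n x
  proof (cases "x \<in> U")
    case True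
    then show ?thesis
      using has_field_derivative_transform_within_open[OF D1(2)[rule_format, of n x] assms(1) True]
      by (simp add: D_def)
  next
    case False
    then have xV: "x \<in> V" using assms(3) by auto
    have "\<And>y. y \<in> V \<Longrightarrow> D2 n y = D n y" using agree by (auto simp: D_def)
    then show ?thesis
      using has_field_derivative_transform_within_open[OF D2(2)[rule_format, of n x] assms(2) xV] False
      by (simp add: D_def)
  qed
  ultimately show ?thesis unfolding smooth_real_def by blast
qed

definition ee :: "real \<Rightarrow> real" where
  "ee x = (if x > 0 then exp (- 1 / x) else 0)"

fun PP :: "nat \<Rightarrow> real poly" where
  "PP 0 = 1"
| "PP (Suc n) = [:0,0,1:] * (PP n - pderiv (PP n))"

definition DD :: "nat \<Rightarrow> real \<Rightarrow> real" where
  "DD n x = (if x > 0 then poly (PP n) (1 / x) * exp (- 1 / x) else 0)"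

lemma poly_exp_lim: "((\<lambda>y. poly p y * exp (- y)) \<longlongrightarrow> (0::real)) at_top"
proof -
  have e: "poly p y * exp (- y) = (\<Sum>i\<le>degree p. coeff p i * (y ^ i / exp y))" for y
    unfolding poly_altdef exp_minus by (simp add: sum_distrib_right divide_inverse mult.assoc)
  have "((\<lambda>y. \<Sum>i\<le>degree p. coeff p i * (y ^ i / exp y)) \<longlongrightarrow> (\<Sum>i\<le>degree p. coeff p i * 0)) at_top"
    by (intro tendsto_intros tendsto_power_div_exp_0)
  then show ?thesis by (simp add: e)
qed

lemma DD_deriv_pos:
  assumes "x > 0"
  shows "(DD n has_real_derivative DD (Suc n) x) (at x)"
proof -
  let ?p = "PP n"
  have d: "((\<lambda>x. poly ?p (1 / x) * exp (- 1 / x)) has_real_derivative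
     poly (pderiv ?p) (1 / x) * (- 1 / x^2) * exp (- 1 / x) + poly ?p (1 / x) * (exp (- 1 / x) * (1 / x^2))) (at x)"
    using assms
    by (auto intro!: derivative_eq_intros DERIV_chain2[OF poly_DERIV] simp: power2_eq_square field_simps)
  have eq: "poly (pderiv ?p) (1 / x) * (- 1 / x^2) * exp (- 1 / x) + poly ?p (1 / x) * (exp (- 1 / x) * (1 / x^2))
      = DD (Suc n) x"
    using assms by (simp add: DD_def algebra_simps power2_eq_square)
  have "((\<lambda>x. poly ?p (1 / x) * exp (- 1 / x)) has_real_derivative DD (Suc n) x) (at x)"
    using d eq by simp
  then show ?thesis
    by (rule has_field_derivative_transform_within_open[where S="{0<..}"]) (use assms in \<open>auto simp: DD_def\<close>)
qed

lemma DD_deriv_neg: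
  assumes "x < 0"
  shows "(DD n has_real_derivative DD (Suc n) x) (at x)"
proof -
  have "((\<lambda>x. 0) has_real_derivative 0) (at x)" by simp
  then have "(DD n has_real_derivative 0) (at x)"
    by (rule has_field_derivative_transform_within_open[where S="{..<0}"]) (use assms in \<open>auto simp: DD_def\<close>)
  then show ?thesis using assms by (simp add: DD_def)
qed

lemma DD_deriv_0: "(DD n has_real_derivative DD (Suc n) 0) (at 0)"
proof -
  have "((\<lambda>h. (DD n (0 + h) - DD n 0) / h) \<longlongrightarrow> 0) (at 0)"
  proof (rule filterlim_split_at)
    show "((\<lambda>h. (DD n (0 + h) - DD n 0) / h) \<longlongrightarrow> 0) (at_left 0)"
    proof (rule Lim_transform_eventually[OF tendsto_const])
      show "\<forall>\<^sub>F h in at_left 0. 0 = (DD n (0 + h) - DD n 0) / h"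
        by (auto simp: DD_def eventually_at_left_field intro!: exI[of _ "-1"])
    qed
    have lim: "((\<lambda>y. poly (pCons 0 (PP n)) y * exp (- y)) \<longlongrightarrow> 0) at_top"
      by (rule poly_exp_lim)
    have "((\<lambda>h. poly (pCons 0 (PP n)) (inverse h) * exp (- inverse h)) \<longlongrightarrow> 0) (at_right 0)"
      by (rule filterlim_compose[OF lim filterlim_inverse_at_top_right])
    then show "((\<lambda>h. (DD n (0 + h) - DD n 0) / h) \<longlongrightarrow> 0) (at_right 0)"
    proof (rule Lim_transform_eventually)
      show "\<forall>\<^sub>F h in at_right 0. poly (pCons 0 (PP n)) (inverse h) * exp (- inverse h) = (DD n (0 + h) - DD n 0) / h"
        by (auto simp: DD_def eventually_at_right_field field_simps intro!: exI[of _ 1])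
    qed
  qed
  then show ?thesis by (simp add: DERIV_def DD_def)
qed

lemma ee_smooth: "smooth_real ee"
proof -
  have "DD 0 = ee" by (auto simp: DD_def ee_def fun_eq_iff)
  moreover have "(DD n has_real_derivative DD (Suc n) x) (at x)" for n x
    using DD_deriv_pos DD_deriv_neg DD_deriv_0 by (cases "x > 0"; cases "x < 0") auto
  ultimately show ?thesis unfolding smooth_real_def by blast
qed

definition bump :: "real \<Rightarrow> real" where
  "bump x = ee (x - 1/4) / (ee (x - 1/4) + ee (3/4 - x))"

lemma ee_nonneg: "ee x \<ge> 0" by (simp add: ee_def)
lemma ee_pos: "x > 0 \<Longrightarrow> ee x > 0" by (simp add: ee_def)

lemma bump_den: "ee (x - 1/4) + ee (3/4 - x) > 0"
proof (cases "x > 1/4")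
  case True then show ?thesis using ee_pos[of "x - 1/4"] ee_nonneg[of "3/4 - x"] by simp
next
  case False then show ?thesis using ee_pos[of "3/4 - x"] ee_nonneg[of "x - 1/4"] by simp
qed

lemma bump_smooth: "smooth_real bump"
proof -
  have a: "smooth_real (\<lambda>x. ee (x - 1/4))"
    using smooth_comp[OF ee_smooth smooth_affine[of 1 "-1/4"]] by simp
  have b: "smooth_real (\<lambda>x. ee (3/4 - x))"
    using smooth_comp[OF ee_smooth smooth_affine[of "-1" "3/4"]] by simp
  have c: "smooth_real (\<lambda>x. 1 / (ee (x - 1/4) + ee (3/4 - x)))"
    using smooth_inverse[OF smooth_add[OF a b]] bump_den by (metis less_irrefl)
  show ?thesis using smooth_mult[OF a c] unfolding bump_def[abs_def] by simp
qed

lemma bump_0: "x \<le> 1/4 \<Longrightarrow> bump x = 0" by (simp add: bump_def ee_def)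
lemma bump_1: "x \<ge> 3/4 \<Longrightarrow> bump x = 1"
  using bump_den[of x] by (simp add: bump_def ee_def)
lemma bump_range: "0 \<le> bump x \<and> bump x \<le> 1"
  using bump_den[of x] ee_nonneg[of "x - 1/4"] ee_nonneg[of "3/4 - x"]
  by (simp add: bump_def divide_le_eq_1)

lemma curves_of_funcs_of: "curves_of A (funcs_of (curves_of A F)) = curves_of A F"
  unfolding curves_of_def funcs_of_def by auto

lemma frol_gen_funcs [simp]:
  "car (gen_by_funcs A F) = A" "curves (gen_by_funcs A F) = curves_of A F"
  "funcs (gen_by_funcs A F) = funcs_of (curves_of A F)"
  by (simp_all add: gen_by_funcs_def)

lemma frolicher_gen_funcs: "frolicher (gen_by_funcs A F)"
  unfolding frolicher_def by (simp add: curves_of_funcs_of)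

lemma frol_gen_curves [simp]:
  "car (gen_by_curves A C) = A" "curves (gen_by_curves A C) = curves_of A (funcs_of C)"
  "funcs (gen_by_curves A C) = funcs_of C"
  by (simp_all add: gen_by_curves_def)

lemma frolicher_gen_curves:
  assumes "\<forall>c\<in>C. \<forall>t. c t \<in> A"
  shows "frolicher (gen_by_curves A C)"
proof -
  have "C \<subseteq> curves_of A (funcs_of C)" using assms unfolding curves_of_def funcs_of_def by auto
  then have "funcs_of (curves_of A (funcs_of C)) = funcs_of C"
    unfolding funcs_of_def curves_of_def by auto
  then show ?thesis unfolding frolicher_def by simp
qed

lemma gen_curves_in:
  assumes "c \<in> C" "\<forall>t. c t \<in> A"
  shows "c \<in> curves (gen_by_curves A C)"
  using assms by (auto simp: curves_of_def funcs_of_def)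

lemma frol_eqs:
  assumes "frolicher S"
  shows "funcs S = funcs_of (curves S)" "curves S = curves_of (car S) (funcs S)"
  using assms unfolding frolicher_def by blast+

lemma frol_curve_car: assumes "frolicher S" "c \<in> curves S" shows "c t \<in> car S"
proof -
  have "c \<in> curves_of (car S) (funcs S)" using assms(2) frol_eqs(2)[OF assms(1)] by blast
  then show ?thesis unfolding curves_of_def by blast
qed

lemma frol_curve_func: assumes "frolicher S" "f \<in> funcs S" "c \<in> curves S" shows "smooth_real (f \<circ> c)"
proof -
  have "f \<in> funcs_of (curves S)" using assms(2) frol_eqs(1)[OF assms(1)] by blast
  then show ?thesis using assms(3) unfolding funcs_of_def by blast
qed

lemma frol_funcI: assumes "frolicher S" "\<forall>c\<in>curves S. smooth_real (f \<circ> c)" shows "f \<in> funcs S"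
proof -
  have "f \<in> funcs_of (curves S)" using assms(2) unfolding funcs_of_def by blast
  then show ?thesis using frol_eqs(1)[OF assms(1)] by blast
qed

lemma frol_curveI: assumes "frolicher S" "\<forall>t. c t \<in> car S" "\<forall>f\<in>funcs S. smooth_real (f \<circ> c)"
  shows "c \<in> curves S"
proof -
  have "c \<in> curves_of (car S) (funcs S)" using assms(2,3) unfolding curves_of_def by blast
  then show ?thesis using frol_eqs(2)[OF assms(1)] by blast
qed

lemma smooth_map_curves:
  assumes "frolicher X" "frolicher W"
  shows "smooth_map X W \<phi> \<longleftrightarrow> (\<forall>x\<in>car X. \<phi> x \<in> car W) \<and> (\<forall>c\<in>curves X. \<phi> \<circ> c \<in> curves W)"
proof
  assume s: "smooth_map X W \<phi>"
  show "(\<forall>x\<in>car X. \<phi> x \<in> car W) \<and> (\<forall>c\<in>curves X. \<phi> \<circ> c \<in> curves W)"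
  proof (intro conjI ballI)
    show "x \<in> car X \<Longrightarrow> \<phi> x \<in> car W" for x using s by (simp add: smooth_map_def)
    fix c assume c: "c \<in> curves X"
    show "\<phi> \<circ> c \<in> curves W"
    proof (rule frol_curveI[OF assms(2)])
      show "\<forall>t. (\<phi> \<circ> c) t \<in> car W" using s c frol_curve_car[OF assms(1)] by (simp add: smooth_map_def)
      show "\<forall>f\<in>funcs W. smooth_real (f \<circ> (\<phi> \<circ> c))"
        using s c frol_curve_func[OF assms(1)] by (simp add: smooth_map_def o_assoc)
    qed
  qed
next
  assume r: "(\<forall>x\<in>car X. \<phi> x \<in> car W) \<and> (\<forall>c\<in>curves X. \<phi> \<circ> c \<in> curves W)"
  show "smooth_map X W \<phi>"
    unfolding smooth_map_def
  proof (intro conjI ballI)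
    show "x \<in> car X \<Longrightarrow> \<phi> x \<in> car W" for x using r by simp
    fix g assume g: "g \<in> funcs W"
    have "\<forall>c\<in>curves X. smooth_real (g \<circ> \<phi> \<circ> c)"
    proof
      fix c assume "c \<in> curves X"
      then have "smooth_real (g \<circ> (\<phi> \<circ> c))" using r g frol_curve_func[OF assms(2)] by blast
      then show "smooth_real (g \<circ> \<phi> \<circ> c)" by (simp add: o_assoc)
    qed
    then show "g \<circ> \<phi> \<in> funcs X" using assms(1) frol_funcI by blast
  qed
qed

lemma smooth_map_comp:
  "smooth_map X Y \<phi> \<Longrightarrow> smooth_map Y Z \<psi> \<Longrightarrow> smooth_map X Z (\<psi> \<circ> \<phi>)"
  unfolding smooth_map_def by (simp add: o_assoc)

lemma smooth_map_cong:
  "smooth_map X Y \<phi> \<Longrightarrow> (\<forall>x\<in>car X. \<phi> x = \<psi> x) \<Longrightarrow> frolicher X \<Longrightarrow> smooth_map X Y \<psi>"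
proof -
  assume a: "smooth_map X Y \<phi>" "\<forall>x\<in>car X. \<phi> x = \<psi> x" "frolicher X"
  show ?thesis unfolding smooth_map_def
  proof (intro conjI ballI)
    show "x \<in> car X \<Longrightarrow> \<psi> x \<in> car Y" for x using a by (auto simp: smooth_map_def)
    fix g assume g: "g \<in> funcs Y"
    have "\<forall>c\<in>curves X. g \<circ> \<psi> \<circ> c = g \<circ> \<phi> \<circ> c"
      using a frol_curve_car[OF a(3)] by (auto simp: fun_eq_iff)
    moreover have "g \<circ> \<phi> \<in> funcs X" using a g by (simp add: smooth_map_def)
    ultimately show "g \<circ> \<psi> \<in> funcs X" using a(3) frol_funcI frol_curve_func
      by (metis (no_types, lifting))
  qed
qed

section \<open>Products\<close>

lemma product_car [simp]: "car (product X Y) = car X \<times> car Y"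
  by (simp add: product_def)

lemma frolicher_product: "frolicher (product X Y)"
  unfolding product_def by (rule frolicher_gen_funcs)

lemma product_curves:
  assumes "frolicher X" "frolicher Y"
  shows "c \<in> curves (product X Y) \<longleftrightarrow>
     (\<forall>t. c t \<in> car X \<times> car Y) \<and> fst \<circ> c \<in> curves X \<and> snd \<circ> c \<in> curves Y"
proof
  assume c: "c \<in> curves (product X Y)"
  then have l: "\<forall>t. c t \<in> car X \<times> car Y" by (simp add: product_def curves_of_def)
  have g: "smooth_real (h \<circ> c)" if "h \<in> {f \<circ> fst | f. f \<in> funcs X} \<union> {g \<circ> snd | g. g \<in> funcs Y}" for h
    using c that by (simp add: product_def curves_of_def)
  show "(\<forall>t. c t \<in> car X \<times> car Y) \<and> fst \<circ> c \<in> curves X \<and> snd \<circ> c \<in> curves Y"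
  proof (intro conjI)
    show "fst \<circ> c \<in> curves X"
      by (rule frol_curveI[OF assms(1)]) (use l g in \<open>auto simp: o_assoc mem_Times_iff\<close>)
    show "snd \<circ> c \<in> curves Y"
      by (rule frol_curveI[OF assms(2)]) (use l g in \<open>auto simp: o_assoc mem_Times_iff\<close>)
  qed (use l in auto)
next
  assume r: "(\<forall>t. c t \<in> car X \<times> car Y) \<and> fst \<circ> c \<in> curves X \<and> snd \<circ> c \<in> curves Y"
  show "c \<in> curves (product X Y)"
    unfolding product_def frol_gen_funcs curves_of_def
    using r frol_curve_func[OF assms(1)] frol_curve_func[OF assms(2)]
    by (auto simp: comp_assoc)
qed

section \<open>Intervals\<close>

lemma id_real_funcs: "id \<in> funcs real_frol"
  by (simp add: real_frol_def funcs_of_def curves_of_def)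

lemma unit_I_car [simp]: "car unit_I = {0..1}"
  by (simp add: unit_I_def subspace_def)

lemma frolicher_unit_I: "frolicher unit_I"
  unfolding unit_I_def subspace_def by (rule frolicher_gen_funcs)

lemma unit_I_curves: "c \<in> curves unit_I \<longleftrightarrow> (\<forall>t. c t \<in> {0..1}) \<and> smooth_real c"
proof
  assume "c \<in> curves unit_I"
  then show "(\<forall>t. c t \<in> {0..1}) \<and> smooth_real c"
    using id_real_funcs by (auto simp: unit_I_def subspace_def curves_of_def)
next
  assume r: "(\<forall>t. c t \<in> {0..1}) \<and> smooth_real c"
  then have "c \<in> curves_of UNIV {id}" by (simp add: curves_of_def)
  then show "c \<in> curves unit_I"
    using r by (auto simp: unit_I_def subspace_def curves_of_def real_frol_def funcs_of_def)
qed

lemma flat_I_car [simp]: "car flat_I = {0..1}"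
  by (simp add: flat_I_def)

lemma frolicher_flat_I: "frolicher flat_I"
  unfolding flat_I_def by (rule frolicher_gen_funcs)

lemma unit_flat_curve: "c \<in> curves unit_I \<Longrightarrow> c \<in> curves flat_I"
  using frol_curve_func[OF frolicher_unit_I]
  by (auto simp: flat_I_def curves_of_def unit_I_curves)

definition mm :: "real \<Rightarrow> real" where "mm t = 1 - bump t"

lemma mm_smooth: "smooth_real mm"
  unfolding mm_def[abs_def] using smooth_add[OF smooth_const smooth_mult[OF smooth_const bump_smooth], of 1 "-1"]
  by simp

lemma mm_range: "mm t \<in> {0..1}" using bump_range[of t] by (simp add: mm_def)
lemma mm_0: "t \<le> 1/4 \<Longrightarrow> mm t = 1" by (simp add: mm_def bump_0)
lemma mm_1: "t \<ge> 3/4 \<Longrightarrow> mm t = 0" by (simp add: mm_def bump_1)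

lemma mm_funcs_unit: "mm \<in> funcs unit_I"
proof -
  have "\<forall>c\<in>curves unit_I. smooth_real (mm \<circ> c)"
    using smooth_comp[OF mm_smooth] by (auto simp: unit_I_curves o_def)
  then show ?thesis using frolicher_unit_I frol_funcI by blast
qed

lemma flat_curve_mm:
  assumes "c \<in> curves flat_I"
  shows "mm \<circ> c \<in> curves unit_I"
proof -
  have "mm \<in> {f \<in> funcs unit_I. \<exists>\<epsilon>. 0 < \<epsilon> \<and> \<epsilon> < 1/4 \<and>
        (\<forall>s\<in>{0..<\<epsilon>}. \<forall>t\<in>{0..<\<epsilon>}. f s = f t) \<and>
        (\<forall>s\<in>{1-\<epsilon><..1}. \<forall>t\<in>{1-\<epsilon><..1}. f s = f t)}"
    using mm_funcs_unit by (auto intro!: exI[of _ "1/8"] simp: mm_0 mm_1)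
  then have "smooth_real (mm \<circ> c)" using assms by (simp add: flat_I_def curves_of_def)
  then show ?thesis using mm_range by (simp add: unit_I_curves)
qed

section \<open>Coproducts and quotients\<close>

lemma coproduct_inl:
  assumes "frolicher X" "frolicher Y" "c \<in> curves X"
  shows "Inl \<circ> c \<in> curves (coproduct X Y)"
  unfolding coproduct_def
  by (rule gen_curves_in) (use assms frol_curve_car in auto)

lemma coproduct_inr:
  assumes "frolicher X" "frolicher Y" "c \<in> curves Y"
  shows "Inr \<circ> c \<in> curves (coproduct X Y)"
  unfolding coproduct_def
  by (rule gen_curves_in) (use assms frol_curve_car[OF assms(2,3)] in auto)

lemma frolicher_coproduct:
  assumes "frolicher X" "frolicher Y"
  shows "frolicher (coproduct X Y)"
  unfolding coproduct_def
  by (rule frolicher_gen_curves) (use frol_curve_car[OF assms(1)] frol_curve_car[OF assms(2)] in \<open>auto simp: image_iff\<close>)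

lemma coproduct_car [simp]: "car (coproduct X Y) = Inl ` car X \<union> Inr ` car Y"
  by (simp add: coproduct_def)

lemma coproduct_out:
  assumes "frolicher X" "frolicher Y" "smooth_map X W \<phi>1" "smooth_map Y W \<phi>2"
    "\<forall>x\<in>car X. \<phi> (Inl x) = \<phi>1 x" "\<forall>y\<in>car Y. \<phi> (Inr y) = \<phi>2 y"
  shows "smooth_map (coproduct X Y) W \<phi>"
  unfolding smooth_map_def
proof (intro conjI ballI)
  show "z \<in> car (coproduct X Y) \<Longrightarrow> \<phi> z \<in> car W" for z
    using assms by (auto simp: smooth_map_def)
  fix g assume g: "g \<in> funcs W"
  have 1: "smooth_real (g \<circ> \<phi> \<circ> (Inl \<circ> c))" if "c \<in> curves X" for c
  proof -
    have "g \<circ> \<phi> \<circ> (Inl \<circ> c) = (g \<circ> \<phi>1) \<circ> c"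
      using assms(5) frol_curve_car[OF assms(1) that] by (auto simp: fun_eq_iff)
    then show ?thesis using frol_curve_func[OF assms(1) _ that] assms(3) g by (simp add: smooth_map_def)
  qed
  have 2: "smooth_real (g \<circ> \<phi> \<circ> (Inr \<circ> c))" if "c \<in> curves Y" for c
  proof -
    have "g \<circ> \<phi> \<circ> (Inr \<circ> c) = (g \<circ> \<phi>2) \<circ> c"
      using assms(6) frol_curve_car[OF assms(2) that] by (auto simp: fun_eq_iff)
    then show ?thesis using frol_curve_func[OF assms(2) _ that] assms(4) g by (simp add: smooth_map_def)
  qed
  show "g \<circ> \<phi> \<in> funcs (coproduct X Y)"
    using 1 2 by (auto simp: coproduct_def funcs_of_def)
qed

lemma quotient_car [simp]: "car (quotient_frol X R) = car X // R"
  by (simp add: quotient_frol_def)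

lemma frolicher_quotient:
  assumes "frolicher X"
  shows "frolicher (quotient_frol X R)"
  unfolding quotient_frol_def
  by (rule frolicher_gen_curves) (use frol_curve_car[OF assms(1)] in \<open>auto intro: quotientI\<close>)

lemma quotient_curve:
  assumes "frolicher X" "c \<in> curves X"
  shows "(\<lambda>t. R `` {c t}) \<in> curves (quotient_frol X R)"
  unfolding quotient_frol_def
  by (rule gen_curves_in) (use frol_curve_car[OF assms] assms(2) in \<open>auto intro: quotientI\<close>)

lemma quotient_out:
  assumes "frolicher X" "smooth_map X W \<phi>" "\<forall>x\<in>car X. \<Phi> (R `` {x}) = \<phi> x"
  shows "smooth_map (quotient_frol X R) W \<Phi>"
  unfolding smooth_map_def
proof (intro conjI ballI)
  show "z \<in> car (quotient_frol X R) \<Longrightarrow> \<Phi> z \<in> car W" for z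
    using assms by (auto simp: smooth_map_def quotient_def)
  fix g assume g: "g \<in> funcs W"
  have 1: "smooth_real (g \<circ> \<Phi> \<circ> (\<lambda>t. R `` {c t}))" if "c \<in> curves X" for c
  proof -
    have "g \<circ> \<Phi> \<circ> (\<lambda>t. R `` {c t}) = (g \<circ> \<phi>) \<circ> c"
      using assms(3) frol_curve_car[OF assms(1) that] by (auto simp: fun_eq_iff)
    then show ?thesis using frol_curve_func[OF assms(1) _ that] assms(2) g by (simp add: smooth_map_def)
  qed
  show "g \<circ> \<Phi> \<in> funcs (quotient_frol X R)"
    using 1 by (auto simp: quotient_frol_def funcs_of_def)
qed

lemma prod_curve_parts:
  assumes "frolicher A" "\<gamma> \<in> curves (product unit_I A)"
  shows "smooth_real (\<lambda>r. fst (\<gamma> r))" "\<forall>r. fst (\<gamma> r) \<in> {0..1}"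
    "snd \<circ> \<gamma> \<in> curves A" "\<forall>r. snd (\<gamma> r) \<in> car A"
proof -
  have h: "(\<forall>t. \<gamma> t \<in> car unit_I \<times> car A) \<and> fst \<circ> \<gamma> \<in> curves unit_I \<and> snd \<circ> \<gamma> \<in> curves A"
    using product_curves[OF frolicher_unit_I assms(1)] assms(2) by blast
  then show "smooth_real (\<lambda>r. fst (\<gamma> r))" "\<forall>r. fst (\<gamma> r) \<in> {0..1}"
    "snd \<circ> \<gamma> \<in> curves A" "\<forall>r. snd (\<gamma> r) \<in> car A"
    by (auto simp: unit_I_curves o_def mem_Times_iff)
qed

lemma prod_curve_mk:
  assumes "frolicher A" "smooth_real a" "\<forall>r. a r \<in> {0..1}" "b \<in> curves A"
  shows "(\<lambda>r. (a r, b r)) \<in> curves (product unit_I A)"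
proof -
  have "fst \<circ> (\<lambda>r. (a r, b r)) = a" "snd \<circ> (\<lambda>r. (a r, b r)) = b" by (auto simp: fun_eq_iff)
  then show ?thesis
    using product_curves[OF frolicher_unit_I assms(1)] assms frol_curve_car[OF assms(1,4)]
    by (auto simp: unit_I_curves)
qed

lemma htpy_smoothI:
  assumes "frolicher A" "frolicher W"
    "\<forall>t\<in>{0..1}. \<forall>x\<in>car A. H (t, x) \<in> car W"
    "\<And>\<gamma>. \<gamma> \<in> curves (product unit_I A) \<Longrightarrow> (\<forall>g\<in>funcs W. smooth_real (g \<circ> H \<circ> \<gamma>))"
  shows "smooth_map (product unit_I A) W H"
proof -
  have "H \<circ> \<gamma> \<in> curves W" if "\<gamma> \<in> curves (product unit_I A)" for \<gamma>
  proof (rule frol_curveI[OF assms(2)])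
    show "\<forall>t. (H \<circ> \<gamma>) t \<in> car W"
    proof
      fix t
      obtain a b where ab: "\<gamma> t = (a, b)" by fastforce
      then show "(H \<circ> \<gamma>) t \<in> car W"
        using frol_curve_car[OF frolicher_product that, of t] assms(3) by auto
    qed
    show "\<forall>f\<in>funcs W. smooth_real (f \<circ> (H \<circ> \<gamma>))" using assms(4)[OF that] by (simp add: o_assoc)
  qed
  then show ?thesis
    unfolding smooth_map_curves[OF frolicher_product assms(2), of unit_I A] using assms(3) by auto
qed

lemma htpy_curve:
  assumes "frolicher A" "frolicher W" "smooth_map (product unit_I A) W H"
    "\<gamma> \<in> curves (product unit_I A)" "g \<in> funcs W"
  shows "smooth_real (g \<circ> H \<circ> \<gamma>)"
proof -
  have "H \<circ> \<gamma> \<in> curves W" using assms(3,4) unfolding smooth_map_curves[OF frolicher_product assms(2), of unit_I A] by blast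
  then show ?thesis using frol_curve_func[OF assms(2,5)] by (simp add: comp_assoc)
qed

lemma const_pointed:
  assumes "frolicher A" "w0 \<in> car W" shows "(\<lambda>_. w0) \<in> pointed_maps A a0 W w0"
proof -
  have "g \<circ> (\<lambda>_. w0) \<in> funcs A" for g
    by (rule frol_funcI[OF assms(1)]) (simp add: o_def smooth_const)
  then show ?thesis using assms by (simp add: pointed_maps_def smooth_map_def)
qed

lemma htpy_refl:
  assumes "frolicher A" "frolicher W" "\<phi> \<in> pointed_maps A a0 W w0" "a0 \<in> car A"
  shows "pointed_homotopic A a0 W w0 \<phi> \<phi>"
proof -
  have sm: "smooth_map A W \<phi>" "\<phi> a0 = w0" using assms(3) by (auto simp: pointed_maps_def)
  have "smooth_map (product unit_I A) W (\<lambda>(t,x). \<phi> x)"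
  proof (rule htpy_smoothI[OF assms(1,2)])
    show "\<forall>t\<in>{0..1}. \<forall>x\<in>car A. (case (t, x) of (t, x) \<Rightarrow> \<phi> x) \<in> car W"
      using sm by (auto simp: smooth_map_def)
    fix \<gamma> assume \<gamma>: "\<gamma> \<in> curves (product unit_I A)"
    have "(\<lambda>(t,x). \<phi> x) \<circ> \<gamma> = \<phi> \<circ> (snd \<circ> \<gamma>)" by (auto simp: fun_eq_iff split: prod.splits)
    moreover have "\<phi> \<circ> (snd \<circ> \<gamma>) \<in> curves W"
      using smooth_map_curves[OF assms(1,2)] sm prod_curve_parts(3)[OF assms(1) \<gamma>] by blast
    ultimately show "\<forall>g\<in>funcs W. smooth_real (g \<circ> (\<lambda>(t,x). \<phi> x) \<circ> \<gamma>)"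
      using frol_curve_func[OF assms(2)] by (simp add: o_assoc[symmetric])
  qed
  then show ?thesis unfolding pointed_homotopic_def using sm by (intro exI[of _ "\<lambda>(t,x). \<phi> x"]) auto
qed

lemma htpy_sym:
  assumes "frolicher A" "frolicher W" "pointed_homotopic A a0 W w0 \<phi> \<psi>"
  shows "pointed_homotopic A a0 W w0 \<psi> \<phi>"
proof -
  obtain H where H: "smooth_map (product unit_I A) W H"
    "\<forall>x\<in>car A. H (0, x) = \<phi> x \<and> H (1, x) = \<psi> x" "\<forall>t\<in>{0..1}. H (t, a0) = w0"
    using assms(3) unfolding pointed_homotopic_def by blast
  define H' where "H' = (\<lambda>(t::real,x). H (1 - t, x))"
  have "smooth_map (product unit_I A) W H'"
  proof (rule htpy_smoothI[OF assms(1,2)])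
    show "\<forall>t\<in>{0..1}. \<forall>x\<in>car A. H' (t, x) \<in> car W"
      using H(1) by (auto simp: smooth_map_def H'_def)
    fix \<gamma> assume \<gamma>: "\<gamma> \<in> curves (product unit_I A)"
    note p = prod_curve_parts[OF assms(1) \<gamma>]
    let ?\<gamma> = "\<lambda>r. (1 - fst (\<gamma> r), snd (\<gamma> r))"
    have "?\<gamma> \<in> curves (product unit_I A)"
    proof (rule prod_curve_mk[OF assms(1)])
      show "smooth_real (\<lambda>r. 1 - fst (\<gamma> r))"
        using smooth_comp[OF smooth_affine[of "-1" 1] p(1)] by simp
      show "\<forall>r. 1 - fst (\<gamma> r) \<in> {0..1}" using p(2) by auto
      show "(\<lambda>r. snd (\<gamma> r)) \<in> curves A" using p(3) by (simp add: o_def)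
    qed
    moreover have "H' \<circ> \<gamma> = H \<circ> ?\<gamma>" by (auto simp: H'_def fun_eq_iff split: prod.splits)
    ultimately show "\<forall>g\<in>funcs W. smooth_real (g \<circ> H' \<circ> \<gamma>)"
      using htpy_curve[OF assms(1,2) H(1)] by (simp add: o_assoc[symmetric])
  qed
  moreover have "\<forall>x\<in>car A. H' (0, x) = \<psi> x \<and> H' (1, x) = \<phi> x" using H(2) by (simp add: H'_def)
  moreover have "\<forall>t\<in>{0..1}. H' (t, a0) = w0" using H(3) by (simp add: H'_def)
  ultimately show ?thesis unfolding pointed_homotopic_def by blast
qed

lemma htpy_trans:
  assumes "frolicher A" "frolicher W" "pointed_homotopic A a0 W w0 \<phi> \<psi>"
    "pointed_homotopic A a0 W w0 \<psi> \<theta>"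
  shows "pointed_homotopic A a0 W w0 \<phi> \<theta>"
proof -
  obtain H1 where H1: "smooth_map (product unit_I A) W H1"
    "\<forall>x\<in>car A. H1 (0, x) = \<phi> x \<and> H1 (1, x) = \<psi> x" "\<forall>t\<in>{0..1}. H1 (t, a0) = w0"
    using assms(3) unfolding pointed_homotopic_def by blast
  obtain H2 where H2: "smooth_map (product unit_I A) W H2"
    "\<forall>x\<in>car A. H2 (0, x) = \<psi> x \<and> H2 (1, x) = \<theta> x" "\<forall>t\<in>{0..1}. H2 (t, a0) = w0"
    using assms(4) unfolding pointed_homotopic_def by blast
  define H where "H = (\<lambda>(t::real,x). if t \<le> 1/2 then H1 (bump (2*t), x) else H2 (bump (2*t - 1), x))"
  have bc: "bump s \<in> {0..1}" for s using bump_range[of s] by auto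
  have "smooth_map (product unit_I A) W H"
  proof (rule htpy_smoothI[OF assms(1,2)])
    show "\<forall>t\<in>{0..1}. \<forall>x\<in>car A. H (t, x) \<in> car W"
      using H1(1) H2(1) bc by (auto simp: smooth_map_def H_def)
    fix \<gamma> assume \<gamma>: "\<gamma> \<in> curves (product unit_I A)"
    note p = prod_curve_parts[OF assms(1) \<gamma>]
    let ?\<gamma>1 = "\<lambda>r. (bump (2 * fst (\<gamma> r)), snd (\<gamma> r))"
    let ?\<gamma>2 = "\<lambda>r. (bump (2 * fst (\<gamma> r) - 1), snd (\<gamma> r))"
    have c1: "?\<gamma>1 \<in> curves (product unit_I A)"
    proof (rule prod_curve_mk[OF assms(1)])
      show "smooth_real (\<lambda>r. bump (2 * fst (\<gamma> r)))"
        using smooth_comp[OF bump_smooth smooth_comp[OF smooth_affine[of 2 0] p(1)]] by simp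
      show "\<forall>r. bump (2 * fst (\<gamma> r)) \<in> {0..1}" using bc by auto
      show "(\<lambda>r. snd (\<gamma> r)) \<in> curves A" using p(3) by (simp add: o_def)
    qed
    have c2: "?\<gamma>2 \<in> curves (product unit_I A)"
    proof (rule prod_curve_mk[OF assms(1)])
      show "smooth_real (\<lambda>r. bump (2 * fst (\<gamma> r) - 1))"
        using smooth_comp[OF bump_smooth smooth_comp[OF smooth_affine[of 2 "-1"] p(1)]] by simp
      show "\<forall>r. bump (2 * fst (\<gamma> r) - 1) \<in> {0..1}" using bc by auto
      show "(\<lambda>r. snd (\<gamma> r)) \<in> curves A" using p(3) by (simp add: o_def)
    qed
    have cont: "continuous_on UNIV (\<lambda>r. fst (\<gamma> r))" using smooth_cont[OF p(1)] .
    show "\<forall>g\<in>funcs W. smooth_real (g \<circ> H \<circ> \<gamma>)"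
    proof
      fix g assume g: "g \<in> funcs W"
      show "smooth_real (g \<circ> H \<circ> \<gamma>)"
      proof (rule smooth_local[where U="{r. fst (\<gamma> r) < 5/8}" and V="{r. 3/8 < fst (\<gamma> r)}"])
        show "open {r. fst (\<gamma> r) < 5/8}" by (rule open_Collect_less[OF cont continuous_on_const])
        show "open {r. 3/8 < fst (\<gamma> r)}" by (rule open_Collect_less[OF continuous_on_const cont])
        show "{r. fst (\<gamma> r) < 5/8} \<union> {r. 3/8 < fst (\<gamma> r)} = UNIV" by auto
        show "smooth_real (g \<circ> H1 \<circ> ?\<gamma>1)" by (rule htpy_curve[OF assms(1,2) H1(1) c1 g])
        show "smooth_real (g \<circ> H2 \<circ> ?\<gamma>2)" by (rule htpy_curve[OF assms(1,2) H2(1) c2 g])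
        show "\<forall>r\<in>{r. fst (\<gamma> r) < 5/8}. (g \<circ> H \<circ> \<gamma>) r = (g \<circ> H1 \<circ> ?\<gamma>1) r"
        proof
          fix r assume r: "r \<in> {r. fst (\<gamma> r) < 5/8}"
          obtain t x where tx: "\<gamma> r = (t, x)" by fastforce
          have x: "x \<in> car A" using p(4) tx by (metis snd_conv)
          have "H (t, x) = H1 (bump (2 * t), x)"
          proof (cases "t \<le> 1/2")
            case False
            then have "H (t, x) = H2 (bump (2*t - 1), x)" by (simp add: H_def)
            also have "\<dots> = H2 (0, x)" using r tx by (simp add: bump_0)
            also have "\<dots> = H1 (1, x)" using H1(2) H2(2) x by simp
            also have "\<dots> = H1 (bump (2 * t), x)" using False by (simp add: bump_1)
            finally show ?thesis .
          qed (simp add: H_def)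
          then show "(g \<circ> H \<circ> \<gamma>) r = (g \<circ> H1 \<circ> ?\<gamma>1) r" using tx by simp
        qed
        show "\<forall>r\<in>{r. 3/8 < fst (\<gamma> r)}. (g \<circ> H \<circ> \<gamma>) r = (g \<circ> H2 \<circ> ?\<gamma>2) r"
        proof
          fix r assume r: "r \<in> {r. 3/8 < fst (\<gamma> r)}"
          obtain t x where tx: "\<gamma> r = (t, x)" by fastforce
          have x: "x \<in> car A" using p(4) tx by (metis snd_conv)
          have "H (t, x) = H2 (bump (2 * t - 1), x)"
          proof (cases "t \<le> 1/2")
            case True
            then have "H (t, x) = H1 (bump (2*t), x)" by (simp add: H_def)
            also have "\<dots> = H1 (1, x)" using r tx by (simp add: bump_1)
            also have "\<dots> = H2 (0, x)" using H1(2) H2(2) x by simp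
            also have "\<dots> = H2 (bump (2 * t - 1), x)" using True by (simp add: bump_0)
            finally show ?thesis .
          qed (simp add: H_def)
          then show "(g \<circ> H \<circ> \<gamma>) r = (g \<circ> H2 \<circ> ?\<gamma>2) r" using tx by simp
        qed
      qed
    qed
  qed
  moreover have "\<forall>x\<in>car A. H (0, x) = \<phi> x \<and> H (1, x) = \<theta> x"
    using H1(2) H2(2) by (simp add: H_def bump_0 bump_1)
  moreover have "\<forall>t\<in>{0..1}. H (t, a0) = w0" using H1(3) H2(3) bc by (simp add: H_def)
  ultimately show ?thesis unfolding pointed_homotopic_def by blast
qed

lemma htpy_end_maps:
  assumes "frolicher A" "frolicher W" "a0 \<in> car A" "pointed_homotopic A a0 W w0 \<phi> \<psi>"
  shows "\<psi> \<in> pointed_maps A a0 W w0"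
proof -
  obtain H where H: "smooth_map (product unit_I A) W H"
    "\<forall>x\<in>car A. H (0, x) = \<phi> x \<and> H (1, x) = \<psi> x" "\<forall>t\<in>{0..1}. H (t, a0) = w0"
    using assms(4) unfolding pointed_homotopic_def by blast
  have i: "smooth_map A (product unit_I A) (\<lambda>x. (1, x))"
    unfolding smooth_map_curves[OF assms(1) frolicher_product]
  proof (intro conjI ballI)
    show "x \<in> car A \<Longrightarrow> (1::real, x) \<in> car (product unit_I A)" for x by simp
    fix c assume c: "c \<in> curves A"
    have "(\<lambda>r. (1::real, c r)) \<in> curves (product unit_I A)"
      by (rule prod_curve_mk[OF assms(1) smooth_const _ c]) simp
    then show "(\<lambda>x. (1::real, x)) \<circ> c \<in> curves (product unit_I A)" by (simp add: o_def)
  qed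
  have "smooth_map A W (H \<circ> (\<lambda>x. (1, x)))" by (rule smooth_map_comp[OF i H(1)])
  then have "smooth_map A W \<psi>" by (rule smooth_map_cong) (use H(2) assms(1) in auto)
  moreover have "\<psi> a0 = w0" using H(2,3) assms(3) by force
  ultimately show ?thesis by (simp add: pointed_maps_def)
qed

lemma class_mem:
  assumes "frolicher A" "frolicher W" "a0 \<in> car A" "\<phi> \<in> pointed_maps A a0 W w0"
  shows "\<phi> \<in> htpy_class A a0 W w0 \<phi>"
  using htpy_refl[OF assms(1,2,4,3)] assms(4) by (simp add: htpy_class_def)

lemma class_eq:
  assumes "frolicher A" "frolicher W" "a0 \<in> car A" "pointed_homotopic A a0 W w0 \<phi> \<psi>"
  shows "htpy_class A a0 W w0 \<phi> = htpy_class A a0 W w0 \<psi>"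
  unfolding htpy_class_def
  using htpy_trans[OF assms(1,2)] htpy_sym[OF assms(1,2)] assms(4) by blast

lemma class_eq_iff:
  assumes "frolicher A" "frolicher W" "a0 \<in> car A" "\<phi> \<in> pointed_maps A a0 W w0"
  shows "htpy_class A a0 W w0 \<phi> = htpy_class A a0 W w0 \<psi> \<longleftrightarrow> pointed_homotopic A a0 W w0 \<psi> \<phi>"
proof
  assume e: "htpy_class A a0 W w0 \<phi> = htpy_class A a0 W w0 \<psi>"
  then have "\<phi> \<in> htpy_class A a0 W w0 \<psi>" using class_mem[OF assms] by simp
  then show "pointed_homotopic A a0 W w0 \<psi> \<phi>" by (simp add: htpy_class_def)
next
  assume "pointed_homotopic A a0 W w0 \<psi> \<phi>"
  then show "htpy_class A a0 W w0 \<phi> = htpy_class A a0 W w0 \<psi>"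
    using class_eq[OF assms(1-3)] by metis
qed

lemma class_cong:
  assumes "\<forall>x\<in>car A. \<phi> x = \<phi>' x"
  shows "htpy_class A a0 W w0 \<phi> = htpy_class A a0 W w0 \<phi>'"
  using assms unfolding htpy_class_def pointed_homotopic_def by auto

lemma class_some:
  assumes "frolicher A" "frolicher W" "a0 \<in> car A" "\<phi> \<in> pointed_maps A a0 W w0"
  shows "(SOME \<psi>. \<psi> \<in> htpy_class A a0 W w0 \<phi>) \<in> htpy_class A a0 W w0 \<phi>"
  using class_mem[OF assms] by (metis someI)

lemma pointed_comp:
  "g \<in> pointed_maps A a0 B b0 \<Longrightarrow> \<phi> \<in> pointed_maps B b0 W w0 \<Longrightarrow> \<phi> \<circ> g \<in> pointed_maps A a0 W w0"
  by (auto simp: pointed_maps_def intro: smooth_map_comp)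

lemma htpy_comp:
  assumes "frolicher A" "frolicher B" "frolicher W" "g \<in> pointed_maps A a0 B b0"
    "pointed_homotopic B b0 W w0 \<phi> \<psi>"
  shows "pointed_homotopic A a0 W w0 (\<phi> \<circ> g) (\<psi> \<circ> g)"
proof -
  obtain H where H: "smooth_map (product unit_I B) W H"
    "\<forall>x\<in>car B. H (0, x) = \<phi> x \<and> H (1, x) = \<psi> x" "\<forall>t\<in>{0..1}. H (t, b0) = w0"
    using assms(5) unfolding pointed_homotopic_def by blast
  have g: "smooth_map A B g" "g a0 = b0" using assms(4) by (auto simp: pointed_maps_def)
  have gc: "\<forall>x\<in>car A. g x \<in> car B" "\<forall>c\<in>curves A. g \<circ> c \<in> curves B"
    using g(1) unfolding smooth_map_curves[OF assms(1,2)] by auto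
  have i: "smooth_map (product unit_I A) (product unit_I B) (\<lambda>(t, x). (t, g x))"
    unfolding smooth_map_curves[OF frolicher_product frolicher_product]
  proof (intro conjI ballI)
    show "z \<in> car (product unit_I A) \<Longrightarrow> (case z of (t, x) \<Rightarrow> (t, g x)) \<in> car (product unit_I B)" for z
      using gc by auto
    fix \<gamma> assume \<gamma>: "\<gamma> \<in> curves (product unit_I A)"
    note p = prod_curve_parts[OF assms(1) \<gamma>]
    have "(\<lambda>r. (fst (\<gamma> r), g (snd (\<gamma> r)))) \<in> curves (product unit_I B)"
    proof (rule prod_curve_mk[OF assms(2) p(1,2)])
      show "(\<lambda>r. g (snd (\<gamma> r))) \<in> curves B" using gc(2) p(3) by (simp add: o_def)
    qed
    then show "(\<lambda>(t, x). (t, g x)) \<circ> \<gamma> \<in> curves (product unit_I B)"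
      by (simp add: o_def case_prod_beta)
  qed
  have "smooth_map (product unit_I A) W (H \<circ> (\<lambda>(t, x). (t, g x)))" by (rule smooth_map_comp[OF i H(1)])
  moreover have "\<forall>x\<in>car A. (H \<circ> (\<lambda>(t, x). (t, g x))) (0, x) = (\<phi> \<circ> g) x \<and> (H \<circ> (\<lambda>(t, x). (t, g x))) (1, x) = (\<psi> \<circ> g) x"
    using H(2) gc by simp
  moreover have "\<forall>t\<in>{0..1}. (H \<circ> (\<lambda>(t, x). (t, g x))) (t, a0) = w0" using H(3) g(2) by simp
  ultimately show ?thesis unfolding pointed_homotopic_def by blast
qed

lemma equiv_closure_equiv:
  assumes "R0 \<subseteq> S \<times> S"
  shows "equiv S (equiv_closure S R0)"
proof -
  have sub: "(R0 \<union> R0\<inverse>)\<^sup>+ \<subseteq> S \<times> S"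
    using assms by (intro trancl_subset_Sigma) auto
  have sym: "sym ((R0 \<union> R0\<inverse>)\<^sup>+)" by (intro sym_trancl) (auto simp: sym_def)
  show ?thesis unfolding equiv_closure_def
  proof (rule equivI)
    show "Id_on S \<union> (R0 \<union> R0\<inverse>)\<^sup>+ \<subseteq> S \<times> S" by (rule Un_least[OF Id_on_subset_Times sub])
    show "refl_on S (Id_on S \<union> (R0 \<union> R0\<inverse>)\<^sup>+)" by (rule refl_onI) blast
    show "sym (Id_on S \<union> (R0 \<union> R0\<inverse>)\<^sup>+)" using sym unfolding sym_def by blast
    show "trans (Id_on S \<union> (R0 \<union> R0\<inverse>)\<^sup>+)"
    proof (rule transI)
      fix a b c assume ab: "(a, b) \<in> Id_on S \<union> (R0 \<union> R0\<inverse>)\<^sup>+" and bc: "(b, c) \<in> Id_on S \<union> (R0 \<union> R0\<inverse>)\<^sup>+"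
      show "(a, c) \<in> Id_on S \<union> (R0 \<union> R0\<inverse>)\<^sup>+"
      proof (cases "(a, b) \<in> Id_on S")
        case True then show ?thesis using bc by (auto simp: Id_on_def)
      next
        case False
        then have ab': "(a, b) \<in> (R0 \<union> R0\<inverse>)\<^sup>+" using ab by blast
        show ?thesis
        proof (cases "(b, c) \<in> Id_on S")
          case True then show ?thesis using ab' by (auto simp: Id_on_def)
        next
          case False
          then have "(b, c) \<in> (R0 \<union> R0\<inverse>)\<^sup>+" using bc by blast
          then show ?thesis using ab' trancl_trans by (metis UnI2)
        qed
      qed
    qed
  qed
qed

lemma collapse_equiv:
  assumes "B \<subseteq> C"
  shows "equiv C (Id_on C \<union> B \<times> B)"
  using assms by (intro equivI) (auto simp: refl_on_def sym_def trans_def)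

context
  fixes X :: "'a frol" and Y :: "'b frol" and f :: "'a \<Rightarrow> 'b" and x0 :: 'a
  assumes frX: "frolicher X" and frY: "frolicher Y" and x0: "x0 \<in> car X"
    and fsm: "smooth_map X Y f"
begin

lemma f_car: "x \<in> car X \<Longrightarrow> f x \<in> car Y"
  using fsm by (simp add: smooth_map_def)

lemma cyl_car: "car (cyl_pre X Y) = Inl ` ({0..1} \<times> car X) \<union> Inr ` car Y"
  by (simp add: cyl_pre_def)

lemma frol_cyl_pre: "frolicher (cyl_pre X Y)"
  unfolding cyl_pre_def by (rule frolicher_coproduct[OF frolicher_product frY])

lemma frol_mcyl: "frolicher (mapping_cyl X Y f)"
  unfolding mapping_cyl_def by (rule frolicher_quotient[OF frol_cyl_pre])

lemma frol_cone: "frolicher (mapping_cone X Y f x0)"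
  unfolding mapping_cone_def by (rule frolicher_quotient[OF frol_mcyl])

lemma cyl_equiv: "equiv (car (cyl_pre X Y)) (cyl_rel X Y f)"
  unfolding cyl_rel_def
  by (rule equiv_closure_equiv) (auto simp: cyl_car f_car)

lemma mcyl_car: "car (mapping_cyl X Y f) = car (cyl_pre X Y) // cyl_rel X Y f"
  by (simp add: mapping_cyl_def)

lemma cyl_class_in: "e \<in> car (cyl_pre X Y) \<Longrightarrow> cyl_class X Y f e \<in> car (mapping_cyl X Y f)"
  by (simp add: mcyl_car cyl_class_def quotientI)

lemma base_sub: "cone_base X Y f x0 \<subseteq> car (mapping_cyl X Y f)"
  unfolding cone_base_def using x0 by (auto intro!: cyl_class_in simp: cyl_car)

lemma cone_equiv: "equiv (car (mapping_cyl X Y f)) (cone_rel X Y f x0)"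
  unfolding cone_rel_def by (rule collapse_equiv[OF base_sub])

lemma cyl_glue: "x \<in> car X \<Longrightarrow> cyl_class X Y f (Inl (1, x)) = cyl_class X Y f (Inr (f x))"
  unfolding cyl_class_def
  by (rule equiv_class_eq[OF cyl_equiv]) (auto simp: cyl_rel_def equiv_closure_def)

lemma base_eq:
  assumes "A \<in> cone_base X Y f x0" "B \<in> cone_base X Y f x0"
  shows "cone_rel X Y f x0 `` {A} = cone_rel X Y f x0 `` {B}"
  by (rule equiv_class_eq[OF cone_equiv]) (use assms in \<open>auto simp: cone_rel_def\<close>)

definition QQ :: "real \<times> 'a \<Rightarrow> ((real \<times> 'a) + 'b) set set" where
  "QQ = (\<lambda>(t, x). cone_rel X Y f x0 `` {cyl_class X Y f (Inl (t, x))})"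

lemma QQ_0: "x \<in> car X \<Longrightarrow> QQ (0, x) = cone_pt X Y f x0"
  unfolding QQ_def cone_pt_def using x0
  by (auto intro!: base_eq simp: cone_base_def)

lemma QQ_x0: "t \<in> {0..1} \<Longrightarrow> QQ (t, x0) = cone_pt X Y f x0"
  unfolding QQ_def cone_pt_def using x0
  by (auto intro!: base_eq simp: cone_base_def)

lemma QQ_1: "x \<in> car X \<Longrightarrow> QQ (1, x) = cone_incl X Y f x0 (f x)"
  unfolding QQ_def cone_incl_def by (simp add: cyl_glue)

lemma incl_pt: "cone_incl X Y f x0 (f x0) = cone_pt X Y f x0"
  using QQ_1[OF x0] QQ_x0[of 1] by simp

lemma incl_smooth: "smooth_map Y (mapping_cone X Y f x0) (cone_incl X Y f x0)"
  unfolding smooth_map_curves[OF frY frol_cone]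
proof (intro conjI ballI)
  show "y \<in> car Y \<Longrightarrow> cone_incl X Y f x0 y \<in> car (mapping_cone X Y f x0)" for y
    unfolding cone_incl_def mapping_cone_def quotient_car
    by (rule quotientI, rule cyl_class_in) (simp add: cyl_car)
  fix c assume c: "c \<in> curves Y"
  have "Inr \<circ> c \<in> curves (cyl_pre X Y)"
    unfolding cyl_pre_def by (rule coproduct_inr[OF frolicher_product frY c])
  then have "(\<lambda>t. cyl_rel X Y f `` {(Inr \<circ> c) t}) \<in> curves (mapping_cyl X Y f)"
    unfolding mapping_cyl_def by (rule quotient_curve[OF frol_cyl_pre])
  then have "(\<lambda>s. cone_rel X Y f x0 `` {(\<lambda>t. cyl_rel X Y f `` {(Inr \<circ> c) t}) s}) \<in> curves (mapping_cone X Y f x0)"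
    unfolding mapping_cone_def by (rule quotient_curve[OF frol_mcyl])
  then show "cone_incl X Y f x0 \<circ> c \<in> curves (mapping_cone X Y f x0)"
    by (simp add: cone_incl_def cyl_class_def o_def)
qed

lemma QQ_smooth: "smooth_map (product unit_I X) (mapping_cone X Y f x0) QQ"
  unfolding smooth_map_curves[OF frolicher_product frol_cone]
proof (intro conjI ballI)
  show "z \<in> car (product unit_I X) \<Longrightarrow> QQ z \<in> car (mapping_cone X Y f x0)" for z
    unfolding QQ_def mapping_cone_def quotient_car
    by (auto intro!: quotientI cyl_class_in simp: cyl_car)
  fix \<gamma> assume \<gamma>: "\<gamma> \<in> curves (product unit_I X)"
  have "\<gamma> \<in> curves (product flat_I X)"
    using \<gamma> unfolding product_curves[OF frolicher_unit_I frX] product_curves[OF frolicher_flat_I frX]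
    by (auto intro: unit_flat_curve)
  then have "Inl \<circ> \<gamma> \<in> curves (cyl_pre X Y)"
    unfolding cyl_pre_def by (rule coproduct_inl[OF frolicher_product frY])
  then have "(\<lambda>t. cyl_rel X Y f `` {(Inl \<circ> \<gamma>) t}) \<in> curves (mapping_cyl X Y f)"
    unfolding mapping_cyl_def by (rule quotient_curve[OF frol_cyl_pre])
  then have "(\<lambda>s. cone_rel X Y f x0 `` {(\<lambda>t. cyl_rel X Y f `` {(Inl \<circ> \<gamma>) t}) s}) \<in> curves (mapping_cone X Y f x0)"
    unfolding mapping_cone_def by (rule quotient_curve[OF frol_mcyl])
  then show "QQ \<circ> \<gamma> \<in> curves (mapping_cone X Y f x0)"
    by (simp add: QQ_def cyl_class_def o_def case_prod_beta)
qed

end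

definition PSI :: "('b \<Rightarrow> 'w) \<Rightarrow> (real \<times> 'a \<Rightarrow> 'w) \<Rightarrow> ((real \<times> 'a) + 'b) \<Rightarrow> 'w" where
  "PSI \<chi> H e = (case e of Inl tx \<Rightarrow> H (mm (fst tx), snd tx) | Inr y \<Rightarrow> \<chi> y)"

definition PHI :: "'a frol \<Rightarrow> 'b frol \<Rightarrow> ('a \<Rightarrow> 'b) \<Rightarrow> 'a \<Rightarrow> ('b \<Rightarrow> 'w) \<Rightarrow> (real \<times> 'a \<Rightarrow> 'w)
   \<Rightarrow> ((real \<times> 'a) + 'b) set set \<Rightarrow> 'w" where
  "PHI X Y f x0 \<chi> H Z = PSI \<chi> H (SOME e. e \<in> car (cyl_pre X Y) \<and> Z = cone_rel X Y f x0 `` {cyl_class X Y f e})"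

context
  fixes X :: "'a frol" and Y :: "'b frol" and f :: "'a \<Rightarrow> 'b" and x0 :: 'a
    and W :: "'w frol" and w0 :: 'w and \<chi> :: "'b \<Rightarrow> 'w" and H :: "real \<times> 'a \<Rightarrow> 'w"
  assumes frX: "frolicher X" and frY: "frolicher Y" and x0: "x0 \<in> car X"
    and fsm: "smooth_map X Y f" and frW: "frolicher W"
    and chi: "\<chi> \<in> pointed_maps Y (f x0) W w0"
    and Hs: "smooth_map (product unit_I X) W H"
    and Hb: "\<forall>x\<in>car X. H (0, x) = \<chi> (f x) \<and> H (1, x) = w0" and Hx0: "\<forall>t\<in>{0..1}. H (t, x0) = w0"
begin

lemma psi_R0:
  assumes "(a, b) \<in> {(Inl (1, x), Inr (f x)) | x. x \<in> car X}"
  shows "PSI \<chi> H a = PSI \<chi> H b"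
  using assms Hb by (auto simp: PSI_def mm_1)

lemma psi_R:
  assumes "(a, b) \<in> cyl_rel X Y f"
  shows "PSI \<chi> H a = PSI \<chi> H b"
proof -
  let ?R0 = "{(Inl (1, x), Inr (f x)) | x. x \<in> car X}"
  have "PSI \<chi> H a = PSI \<chi> H b" if "(a, b) \<in> (?R0 \<union> ?R0\<inverse>)\<^sup>+"
    using that
  proof (induction rule: trancl_induct)
    case (base y) then show ?case using psi_R0 by auto
  next
    case (step y z) then show ?case using psi_R0 by auto
  qed
  then show ?thesis using assms unfolding cyl_rel_def equiv_closure_def by auto
qed

lemma psi_base:
  assumes "A \<in> cone_base X Y f x0" "e \<in> A"
  shows "PSI \<chi> H e = w0"
proof -
  from assms(1) consider (a) x where "x \<in> car X" "A = cyl_class X Y f (Inl (0, x))"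
    | (b) t where "t \<in> {0..1}" "A = cyl_class X Y f (Inl (t, x0))"
    unfolding cone_base_def by blast
  then show ?thesis
  proof cases
    case a
    then have "PSI \<chi> H e = PSI \<chi> H (Inl (0, x))" using assms(2) psi_R by (auto simp: cyl_class_def)
    then show ?thesis using a Hb by (simp add: PSI_def mm_0)
  next
    case b
    then have "PSI \<chi> H e = PSI \<chi> H (Inl (t, x0))" using assms(2) psi_R by (auto simp: cyl_class_def)
    then show ?thesis using b Hx0 mm_range[of t] by (simp add: PSI_def)
  qed
qed

lemma phi_psi:
  assumes e: "e \<in> car (cyl_pre X Y)"
  shows "PHI X Y f x0 \<chi> H (cone_rel X Y f x0 `` {cyl_class X Y f e}) = PSI \<chi> H e"
proof -
  let ?P = "\<lambda>e'. e' \<in> car (cyl_pre X Y) \<and> cone_rel X Y f x0 `` {cyl_class X Y f e} = cone_rel X Y f x0 `` {cyl_class X Y f e'}"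
  have "?P (SOME e'. ?P e')" by (rule someI[of ?P e]) (use e in auto)
  then obtain e' where e': "e' \<in> car (cyl_pre X Y)"
    "cone_rel X Y f x0 `` {cyl_class X Y f e} = cone_rel X Y f x0 `` {cyl_class X Y f e'}"
    "(SOME e'. ?P e') = e'" by blast
  have ph: "PHI X Y f x0 \<chi> H (cone_rel X Y f x0 `` {cyl_class X Y f e}) = PSI \<chi> H e'"
    unfolding PHI_def using e'(3) by simp
  have cin: "cyl_class X Y f e \<in> car (mapping_cyl X Y f)" "cyl_class X Y f e' \<in> car (mapping_cyl X Y f)"
    using cyl_class_in[OF frX frY x0 fsm] e e'(1) by auto
  have "(cyl_class X Y f e, cyl_class X Y f e') \<in> cone_rel X Y f x0"
    using eq_equiv_class_iff[OF cone_equiv[OF frX frY x0 fsm] cin] e'(2) by blast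
  then consider "cyl_class X Y f e = cyl_class X Y f e'"
    | "cyl_class X Y f e \<in> cone_base X Y f x0" "cyl_class X Y f e' \<in> cone_base X Y f x0"
    unfolding cone_rel_def by blast
  then show ?thesis
  proof cases
    case 1
    then have "(e, e') \<in> cyl_rel X Y f"
      using eq_equiv_class_iff[OF cyl_equiv[OF frX frY x0 fsm] e e'(1)] by (simp add: cyl_class_def)
    then show ?thesis using ph psi_R by simp
  next
    case 2
    have "e \<in> cyl_class X Y f e" "e' \<in> cyl_class X Y f e'"
      using equiv_class_self[OF cyl_equiv[OF frX frY x0 fsm]] e e'(1) by (auto simp: cyl_class_def)
    then show ?thesis using ph psi_base 2 by metis
  qed
qed

lemma psi_smooth: "smooth_map (cyl_pre X Y) W (PSI \<chi> H)"
  unfolding cyl_pre_def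
proof (rule coproduct_out[OF frolicher_product frY])
  show "smooth_map Y W \<chi>" using chi by (simp add: pointed_maps_def)
  show "\<forall>y\<in>car Y. PSI \<chi> H (Inr y) = \<chi> y" by (simp add: PSI_def)
  show "\<forall>x\<in>car (product flat_I X). PSI \<chi> H (Inl x) = (\<lambda>(t, x). H (mm t, x)) x"
    by (auto simp: PSI_def)
  show "smooth_map (product flat_I X) W (\<lambda>(t, x). H (mm t, x))"
    unfolding smooth_map_curves[OF frolicher_product frW]
  proof (intro conjI ballI)
    show "z \<in> car (product flat_I X) \<Longrightarrow> (case z of (t, x) \<Rightarrow> H (mm t, x)) \<in> car W" for z
      using Hs mm_range by (auto simp: smooth_map_def)
    fix \<gamma> assume \<gamma>: "\<gamma> \<in> curves (product flat_I X)"
    then have g: "fst \<circ> \<gamma> \<in> curves flat_I" "snd \<circ> \<gamma> \<in> curves X"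
      unfolding product_curves[OF frolicher_flat_I frX] by auto
    have "mm \<circ> (fst \<circ> \<gamma>) \<in> curves unit_I" by (rule flat_curve_mm[OF g(1)])
    then have "(\<lambda>r. (mm (fst (\<gamma> r)), snd (\<gamma> r))) \<in> curves (product unit_I X)"
      using prod_curve_mk[OF frX, of "\<lambda>r. mm (fst (\<gamma> r))" "\<lambda>r. snd (\<gamma> r)"] g(2)
      by (auto simp: unit_I_curves o_def)
    then have "H \<circ> (\<lambda>r. (mm (fst (\<gamma> r)), snd (\<gamma> r))) \<in> curves W"
      using Hs unfolding smooth_map_curves[OF frolicher_product frW, of unit_I X] by blast
    then show "(\<lambda>(t, x). H (mm t, x)) \<circ> \<gamma> \<in> curves W" by (simp add: o_def case_prod_beta)
  qed
qed

lemma phi_smooth: "smooth_map (mapping_cone X Y f x0) W (PHI X Y f x0 \<chi> H)"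
proof -
  have s1: "smooth_map (mapping_cyl X Y f) W (\<lambda>A. PHI X Y f x0 \<chi> H (cone_rel X Y f x0 `` {A}))"
    unfolding mapping_cyl_def
    by (rule quotient_out[OF frol_cyl_pre[OF frX frY x0 fsm] psi_smooth])
       (use phi_psi in \<open>simp add: cyl_class_def\<close>)
  show ?thesis unfolding mapping_cone_def
    by (rule quotient_out[OF frol_mcyl[OF frX frY x0 fsm] s1]) simp
qed

lemma phi_pt: "PHI X Y f x0 \<chi> H (cone_pt X Y f x0) = w0"
  unfolding cone_pt_def using phi_psi[of "Inl (0, x0)"] x0 Hb
  by (simp add: cyl_car[OF frX frY x0 fsm] PSI_def mm_0)

lemma phi_incl: "y \<in> car Y \<Longrightarrow> PHI X Y f x0 \<chi> H (cone_incl X Y f x0 y) = \<chi> y"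
  unfolding cone_incl_def using phi_psi[of "Inr y"]
  by (simp add: cyl_car[OF frX frY x0 fsm] PSI_def)

lemma phi_pointed: "PHI X Y f x0 \<chi> H \<in> pointed_maps (mapping_cone X Y f x0) (cone_pt X Y f x0) W w0"
  using phi_smooth phi_pt by (simp add: pointed_maps_def)

end

theorem lemma6:
  fixes X :: "'a frol" and Y :: "'b frol" and W :: "'w frol"
    and f :: "'a \<Rightarrow> 'b" and x0 :: 'a and y0 :: 'b and w0 :: 'w
  assumes "frolicher X" and "frolicher Y" and "frolicher W"
    and "x0 \<in> car X" and "y0 \<in> car Y" and "w0 \<in> car W"
    and "smooth_map X Y f" and "f x0 = y0"
  shows "induced Y y0 W w0 (cone_incl X Y f x0)
            ` htpy_set (mapping_cone X Y f x0) (cone_pt X Y f x0) W w0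
         = {K \<in> htpy_set Y y0 W w0.
              induced X x0 W w0 f K = htpy_class X x0 W w0 (\<lambda>_. w0)}"
proof -
  note frX = assms(1) and frY = assms(2) and frW = assms(3) and x0 = assms(4) and y0 = assms(5)
    and w0 = assms(6) and fsm = assms(7) and fx0 = assms(8)
  let ?T = "mapping_cone X Y f x0" and ?pt = "cone_pt X Y f x0" and ?l = "cone_incl X Y f x0"
  have frT: "frolicher ?T" by (rule frol_cone[OF frX frY x0 fsm])
  have pt_car: "?pt \<in> car ?T"
    unfolding cone_pt_def mapping_cone_def quotient_car
    by (rule quotientI, rule cyl_class_in[OF frX frY x0 fsm]) (simp add: cyl_car[OF frX frY x0 fsm] x0)
  have lpm: "?l \<in> pointed_maps Y y0 ?T ?pt"
    using incl_smooth[OF frX frY x0 fsm] incl_pt[OF frX frY x0 fsm] fx0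
    by (simp add: pointed_maps_def)
  have fpm: "f \<in> pointed_maps X x0 Y y0" using fsm fx0 by (simp add: pointed_maps_def)
  have cpm: "(\<lambda>_. w0) \<in> pointed_maps X x0 W w0" by (rule const_pointed[OF frX w0])
  show ?thesis
  proof (intro set_eqI iffI)
    fix K assume "K \<in> induced Y y0 W w0 ?l ` htpy_set ?T ?pt W w0"
    then obtain \<Phi> where \<Phi>: "\<Phi> \<in> pointed_maps ?T ?pt W w0"
      and K: "K = induced Y y0 W w0 ?l (htpy_class ?T ?pt W w0 \<Phi>)"
      unfolding htpy_set_def by blast
    define \<psi> where "\<psi> = (SOME \<psi>. \<psi> \<in> htpy_class ?T ?pt W w0 \<Phi>)"
    have \<psi>: "\<psi> \<in> htpy_class ?T ?pt W w0 \<Phi>"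
      unfolding \<psi>_def by (rule class_some[OF frT frW pt_car \<Phi>])
    then have \<psi>pm: "\<psi> \<in> pointed_maps ?T ?pt W w0" by (simp add: htpy_class_def)
    have K2: "K = htpy_class Y y0 W w0 (\<psi> \<circ> ?l)" unfolding K induced_def \<psi>_def ..
    have \<psi>l: "\<psi> \<circ> ?l \<in> pointed_maps Y y0 W w0" by (rule pointed_comp[OF lpm \<psi>pm])
    have Kset: "K \<in> htpy_set Y y0 W w0" unfolding K2 htpy_set_def using \<psi>l by blast
    define \<chi> where "\<chi> = (SOME \<chi>. \<chi> \<in> htpy_class Y y0 W w0 (\<psi> \<circ> ?l))"
    have \<chi>: "\<chi> \<in> htpy_class Y y0 W w0 (\<psi> \<circ> ?l)"
      unfolding \<chi>_def by (rule class_some[OF frY frW y0 \<psi>l])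
    have ind: "induced X x0 W w0 f K = htpy_class X x0 W w0 (\<chi> \<circ> f)"
      unfolding induced_def K2 \<chi>_def ..
    have h1: "pointed_homotopic X x0 W w0 ((\<psi> \<circ> ?l) \<circ> f) (\<chi> \<circ> f)"
      by (rule htpy_comp[OF frX frY frW fpm]) (use \<chi> in \<open>simp add: htpy_class_def\<close>)
    have h2: "pointed_homotopic X x0 W w0 (\<lambda>_. w0) ((\<psi> \<circ> ?l) \<circ> f)"
      unfolding pointed_homotopic_def
    proof (intro exI conjI)
      have "smooth_map ?T W \<psi>" using \<psi>pm by (simp add: pointed_maps_def)
      then show "smooth_map (product unit_I X) W (\<psi> \<circ> QQ X Y f x0)"
        by (rule smooth_map_comp[OF QQ_smooth[OF frX frY x0 fsm]])
      have "\<psi> ?pt = w0" using \<psi>pm by (simp add: pointed_maps_def)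
      then show "\<forall>x\<in>car X. (\<psi> \<circ> QQ X Y f x0) (0, x) = w0 \<and> (\<psi> \<circ> QQ X Y f x0) (1, x) = (\<psi> \<circ> ?l \<circ> f) x"
        using QQ_0[OF frX frY x0 fsm] QQ_1[OF frX frY x0 fsm] by simp
      show "\<forall>t\<in>{0..1}. (\<psi> \<circ> QQ X Y f x0) (t, x0) = w0"
        using QQ_x0[OF frX frY x0 fsm] \<open>\<psi> ?pt = w0\<close> by simp
    qed
    have "pointed_homotopic X x0 W w0 (\<chi> \<circ> f) (\<lambda>_. w0)"
      using htpy_sym[OF frX frW htpy_trans[OF frX frW h2 h1]] .
    then have "htpy_class X x0 W w0 (\<chi> \<circ> f) = htpy_class X x0 W w0 (\<lambda>_. w0)"
      by (rule class_eq[OF frX frW x0])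
    then show "K \<in> {K \<in> htpy_set Y y0 W w0. induced X x0 W w0 f K = htpy_class X x0 W w0 (\<lambda>_. w0)}"
      using Kset ind by simp
  next
    fix K assume "K \<in> {K \<in> htpy_set Y y0 W w0. induced X x0 W w0 f K = htpy_class X x0 W w0 (\<lambda>_. w0)}"
    then have Kset: "K \<in> htpy_set Y y0 W w0"
      and Kf: "induced X x0 W w0 f K = htpy_class X x0 W w0 (\<lambda>_. w0)" by auto
    then obtain \<phi> where \<phi>: "\<phi> \<in> pointed_maps Y y0 W w0" and K: "K = htpy_class Y y0 W w0 \<phi>"
      unfolding htpy_set_def by blast
    define \<chi> where "\<chi> = (SOME \<chi>. \<chi> \<in> K)"
    have \<chi>K: "\<chi> \<in> K" unfolding \<chi>_def K by (rule class_some[OF frY frW y0 \<phi>])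
    then have \<chi>: "\<chi> \<in> pointed_maps Y y0 W w0" "pointed_homotopic Y y0 W w0 \<phi> \<chi>"
      by (auto simp: K htpy_class_def)
    have Kc: "K = htpy_class Y y0 W w0 \<chi>" unfolding K by (rule class_eq[OF frY frW y0 \<chi>(2)])
    have "htpy_class X x0 W w0 (\<chi> \<circ> f) = htpy_class X x0 W w0 (\<lambda>_. w0)"
      using Kf unfolding induced_def \<chi>_def .
    moreover have \<chi>f: "\<chi> \<circ> f \<in> pointed_maps X x0 W w0" by (rule pointed_comp[OF fpm \<chi>(1)])
    ultimately have "pointed_homotopic X x0 W w0 (\<lambda>_. w0) (\<chi> \<circ> f)"
      using class_eq_iff[OF frX frW x0 \<chi>f] by blast
    then have "pointed_homotopic X x0 W w0 (\<chi> \<circ> f) (\<lambda>_. w0)" by (rule htpy_sym[OF frX frW])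
    then obtain H where Hs: "smooth_map (product unit_I X) W H"
      and Hb: "\<forall>x\<in>car X. H (0, x) = \<chi> (f x) \<and> H (1, x) = w0" and Hx0: "\<forall>t\<in>{0..1}. H (t, x0) = w0"
      unfolding pointed_homotopic_def by auto
    have \<chi>': "\<chi> \<in> pointed_maps Y (f x0) W w0" using \<chi>(1) fx0 by simp
    let ?\<Phi> = "PHI X Y f x0 \<chi> H"
    have \<Phi>: "?\<Phi> \<in> pointed_maps ?T ?pt W w0"
      by (rule phi_pointed[OF frX frY x0 fsm frW \<chi>' Hs Hb Hx0])
    define \<Phi>' where "\<Phi>' = (SOME \<psi>. \<psi> \<in> htpy_class ?T ?pt W w0 ?\<Phi>)"
    have \<Phi>': "\<Phi>' \<in> htpy_class ?T ?pt W w0 ?\<Phi>"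
      unfolding \<Phi>'_def by (rule class_some[OF frT frW pt_car \<Phi>])
    have "pointed_homotopic Y y0 W w0 (?\<Phi> \<circ> ?l) (\<Phi>' \<circ> ?l)"
      by (rule htpy_comp[OF frY frT frW lpm]) (use \<Phi>' in \<open>simp add: htpy_class_def\<close>)
    then have "htpy_class Y y0 W w0 (\<Phi>' \<circ> ?l) = htpy_class Y y0 W w0 (?\<Phi> \<circ> ?l)"
      using class_eq[OF frY frW y0] by metis
    also have "\<dots> = htpy_class Y y0 W w0 \<chi>"
      by (rule class_cong) (simp add: phi_incl[OF frX frY x0 fsm frW \<chi>' Hs Hb Hx0])
    finally have "induced Y y0 W w0 ?l (htpy_class ?T ?pt W w0 ?\<Phi>) = K"
      unfolding induced_def \<Phi>'_def Kc .
    moreover have "htpy_class ?T ?pt W w0 ?\<Phi> \<in> htpy_set ?T ?pt W w0"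
      unfolding htpy_set_def using \<Phi> by blast
    ultimately show "K \<in> induced Y y0 W w0 ?l ` htpy_set ?T ?pt W w0" by (metis imageI)
  qed
qed

end
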